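(* Let $\alpha\in(0,1/2)$. There exist constants $c,C>0$ depending only on $\alpha$ such that for every irreducible discrete-time Markov chain on a finite state space, \[ c\, t_{\mathrm{mov}}(\alpha)\le t_{\mathrm{mix}}\le C\, t_{\mathrm{mov}}(\alpha). \]
   Context: Let $(X_t)_{t\ge0}$ be an irreducible discrete-time Markov chain on a finite state space $\Omega$ with transition matrix $P$ and stationary distribution $\pi$; write $P^t(x,y)=\mathbb{P}_x(X_t=y)$. Let $d(t)=\max_x\|P^t(x,\cdot)-\pi\|$, where $\|\mu-\nu\|$ is the total variation distance, and $t_{\mathrm{mix}}(\epsilon)=\min\{t\ge0: d(t)\le\epsilon\}$, $t_{\mathrm{mix}}=t_{\mathrm{mix}}(1/4)$. For $\alpha\in(0,1)$ let $\mathcal{A}(\alpha)$ be the set of sequences $A=(A_t)_{t\ge0}$ of subsets of $\Omega$ with $\pi(A_t)\ge\alpha$ for all $t$; for such $A$ let $\tau_A=\inf\{t\ge0: X_t\in A_t\}$, and define $t_{\mathrm{mov}}(\alpha)=\sup_{x\in\Omega,\,A\in\mathcal{A}(\alpha)}\mathbb{E}_x[\tau_A]$. *)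

theory Defs
  imports "HOL-Analysis.Analysis"
begin

text \<open>A finite state space is modelled as a finite nonempty set S of naturals
(every finite set is in bijection with one); the transition matrix is
P :: nat => nat => real, only its entries on S x S matter.\<close>

definition stochastic :: "nat set \<Rightarrow> (nat \<Rightarrow> nat \<Rightarrow> real) \<Rightarrow> bool" where
  "stochastic S P \<longleftrightarrow> (\<forall>x\<in>S. \<forall>y\<in>S. P x y \<ge> 0) \<and> (\<forall>x\<in>S. (\<Sum>y\<in>S. P x y) = 1)"

fun mpow :: "nat set \<Rightarrow> (nat \<Rightarrow> nat \<Rightarrow> real) \<Rightarrow> nat \<Rightarrow> nat \<Rightarrow> nat \<Rightarrow> real" where
  "mpow S P 0 x y = (if x = y then 1 else 0)"
| "mpow S P (Suc n) x y = (\<Sum>z\<in>S. mpow S P n x z * P z y)"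

definition irreducible_chain :: "nat set \<Rightarrow> (nat \<Rightarrow> nat \<Rightarrow> real) \<Rightarrow> bool" where
  "irreducible_chain S P \<longleftrightarrow> (\<forall>x\<in>S. \<forall>y\<in>S. \<exists>n. mpow S P n x y > 0)"

definition stationary :: "nat set \<Rightarrow> (nat \<Rightarrow> nat \<Rightarrow> real) \<Rightarrow> (nat \<Rightarrow> real) \<Rightarrow> bool" where
  "stationary S P \<pi> \<longleftrightarrow> (\<forall>y\<in>S. \<pi> y \<ge> 0) \<and> sum \<pi> S = 1 \<and>
     (\<forall>y\<in>S. (\<Sum>x\<in>S. \<pi> x * P x y) = \<pi> y)"

definition tv :: "nat set \<Rightarrow> (nat \<Rightarrow> real) \<Rightarrow> (nat \<Rightarrow> real) \<Rightarrow> real" where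
  "tv S \<mu> \<nu> = (1/2) * (\<Sum>y\<in>S. \<bar>\<mu> y - \<nu> y\<bar>)"

definition dmix :: "nat set \<Rightarrow> (nat \<Rightarrow> nat \<Rightarrow> real) \<Rightarrow> (nat \<Rightarrow> real) \<Rightarrow> nat \<Rightarrow> real" where
  "dmix S P \<pi> t = Max ((\<lambda>x. tv S (mpow S P t x) \<pi>) ` S)"

definition tmix :: "nat set \<Rightarrow> (nat \<Rightarrow> nat \<Rightarrow> real) \<Rightarrow> (nat \<Rightarrow> real) \<Rightarrow> real \<Rightarrow> ennreal" where
  "tmix S P \<pi> \<epsilon> = (if \<exists>t. dmix S P \<pi> t \<le> \<epsilon>
      then of_nat (LEAST t. dmix S P \<pi> t \<le> \<epsilon>) else \<infinity>)"

text \<open>survive S P A x t y = P_x(X_t = y and X_s \<notin> A_s for all s \<le> t)\<close>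
fun survive :: "nat set \<Rightarrow> (nat \<Rightarrow> nat \<Rightarrow> real) \<Rightarrow> (nat \<Rightarrow> nat set) \<Rightarrow> nat \<Rightarrow> nat \<Rightarrow> nat \<Rightarrow> real" where
  "survive S P A x 0 y = (if y = x \<and> y \<notin> A 0 then 1 else 0)"
| "survive S P A x (Suc t) y =
     (if y \<in> A (Suc t) then 0 else (\<Sum>z\<in>S. survive S P A x t z * P z y))"

text \<open>E_x[tau_A] = sum over t of P_x(tau_A > t), in [0, infinity]\<close>
definition exp_hit :: "nat set \<Rightarrow> (nat \<Rightarrow> nat \<Rightarrow> real) \<Rightarrow> (nat \<Rightarrow> nat set) \<Rightarrow> nat \<Rightarrow> ennreal" where
  "exp_hit S P A x = (\<Sum>t. ennreal (\<Sum>y\<in>S. survive S P A x t y))"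

definition targets :: "nat set \<Rightarrow> (nat \<Rightarrow> real) \<Rightarrow> real \<Rightarrow> (nat \<Rightarrow> nat set) set" where
  "targets S \<pi> \<alpha> = {A. \<forall>t. A t \<subseteq> S \<and> sum \<pi> (A t) \<ge> \<alpha>}"

definition tmov :: "nat set \<Rightarrow> (nat \<Rightarrow> nat \<Rightarrow> real) \<Rightarrow> (nat \<Rightarrow> real) \<Rightarrow> real \<Rightarrow> ennreal" where
  "tmov S P \<pi> \<alpha> = (SUP x\<in>S. SUP A\<in>targets S \<pi> \<alpha>. exp_hit S P A x)"

end

theory Submission
  imports Defs
begin

lemma delta_sum: "finite S \<Longrightarrow> x \<in> S \<Longrightarrow> (\<Sum>z\<in>S. (if x = z then 1 else 0) * (g z::real)) = g x"
proof -
  assume "finite S" "x \<in> S"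
  have "(\<Sum>z\<in>S. (if x = z then 1 else 0) * g z) = (\<Sum>z\<in>S. if x = z then g z else 0)"
    by (rule sum.cong) auto
  also have "\<dots> = g x" using \<open>finite S\<close> \<open>x \<in> S\<close> by (simp add: sum.delta)
  finally show ?thesis .
qed

locale mc =
  fixes S :: "nat set" and P :: "nat \<Rightarrow> nat \<Rightarrow> real" and \<pi> :: "nat \<Rightarrow> real"
  assumes fin: "finite S" and sto: "stochastic S P" and stat: "stationary S P \<pi>"
begin

lemma P_nonneg: "x \<in> S \<Longrightarrow> y \<in> S \<Longrightarrow> P x y \<ge> 0"
  using sto by (auto simp: stochastic_def)
lemma P_row: "x \<in> S \<Longrightarrow> (\<Sum>y\<in>S. P x y) = 1"
  using sto by (auto simp: stochastic_def)
lemma pi_nonneg: "y \<in> S \<Longrightarrow> \<pi> y \<ge> 0"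
  using stat by (auto simp: stationary_def)
lemma pi_sum: "sum \<pi> S = 1"
  using stat by (auto simp: stationary_def)
lemma pi_stat: "y \<in> S \<Longrightarrow> (\<Sum>x\<in>S. \<pi> x * P x y) = \<pi> y"
  using stat by (auto simp: stationary_def)

lemma mpow_nonneg: "y \<in> S \<Longrightarrow> mpow S P n x y \<ge> 0"
proof (induction n arbitrary: y)
  case 0 then show ?case by simp
next
  case (Suc n) then show ?case by (auto intro!: sum_nonneg mult_nonneg_nonneg P_nonneg)
qed

lemma mpow_row: "x \<in> S \<Longrightarrow> (\<Sum>y\<in>S. mpow S P n x y) = 1"
proof (induction n)
  case 0 then show ?case using fin by simp
next
  case (Suc n)
  have "(\<Sum>y\<in>S. mpow S P (Suc n) x y) = (\<Sum>z\<in>S. mpow S P n x z * (\<Sum>y\<in>S. P z y))"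
    unfolding mpow.simps sum_distrib_left by (rule sum.swap)
  also have "\<dots> = (\<Sum>z\<in>S. mpow S P n x z)" by (simp add: P_row)
  finally show ?case using Suc by simp
qed

lemma mpow_add: "y \<in> S \<Longrightarrow> mpow S P (a + b) x y = (\<Sum>w\<in>S. mpow S P a x w * mpow S P b w y)"
proof (induction b arbitrary: y)
  case 0
  have "(\<Sum>w\<in>S. mpow S P a x w * mpow S P 0 w y) = (if y \<in> S then mpow S P a x y else 0)"
    using fin by (simp add: if_distrib sum.delta cong: if_cong)
  then show ?case using 0 by (cases a) auto
next
  case (Suc b)
  have "mpow S P (a + Suc b) x y = (\<Sum>u\<in>S. mpow S P (a+b) x u * P u y)" by simp
  also have "\<dots> = (\<Sum>u\<in>S. (\<Sum>w\<in>S. mpow S P a x w * mpow S P b w u) * P u y)"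
    using Suc.IH by simp
  also have "\<dots> = (\<Sum>u\<in>S. \<Sum>w\<in>S. mpow S P a x w * mpow S P b w u * P u y)"
    by (simp add: sum_distrib_right)
  also have "\<dots> = (\<Sum>w\<in>S. \<Sum>u\<in>S. mpow S P a x w * mpow S P b w u * P u y)"
    by (rule sum.swap)
  also have "\<dots> = (\<Sum>w\<in>S. mpow S P a x w * mpow S P (Suc b) w y)"
    by (simp add: sum_distrib_left mult.assoc)
  finally show ?case .
qed

lemma mpow_one: "x \<in> S \<Longrightarrow> mpow S P (Suc 0) x w = P x w"
  using fin by (simp add: delta_sum)

lemma mpow_stat: "y \<in> S \<Longrightarrow> (\<Sum>x\<in>S. \<pi> x * mpow S P n x y) = \<pi> y"
proof (induction n arbitrary: y)
  case 0 then show ?case using fin by (simp add: if_distrib cong: if_cong)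
next
  case (Suc n)
  have "(\<Sum>x\<in>S. \<pi> x * mpow S P (Suc n) x y) = (\<Sum>x\<in>S. \<Sum>z\<in>S. \<pi> x * mpow S P n x z * P z y)"
    by (simp add: sum_distrib_left mult.assoc)
  also have "\<dots> = (\<Sum>z\<in>S. \<Sum>x\<in>S. \<pi> x * mpow S P n x z * P z y)" by (rule sum.swap)
  also have "\<dots> = (\<Sum>z\<in>S. (\<Sum>x\<in>S. \<pi> x * mpow S P n x z) * P z y)"
    by (simp add: sum_distrib_right)
  also have "\<dots> = (\<Sum>z\<in>S. \<pi> z * P z y)" using Suc.IH by simp
  finally show ?case using pi_stat Suc.prems by simp
qed

definition Pf :: "nat \<Rightarrow> (nat \<Rightarrow> real) \<Rightarrow> nat \<Rightarrow> real" where
  "Pf n f x = (\<Sum>w\<in>S. mpow S P n x w * f w)"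

lemma Pf_add: "Pf (a + b) f x = Pf a (Pf b f) x"
proof -
  have "Pf (a + b) f x = (\<Sum>y\<in>S. (\<Sum>w\<in>S. mpow S P a x w * mpow S P b w y) * f y)"
    unfolding Pf_def by (intro sum.cong refl) (simp add: mpow_add)
  also have "\<dots> = (\<Sum>y\<in>S. \<Sum>w\<in>S. mpow S P a x w * mpow S P b w y * f y)"
    by (simp add: sum_distrib_right)
  also have "\<dots> = (\<Sum>w\<in>S. \<Sum>y\<in>S. mpow S P a x w * mpow S P b w y * f y)" by (rule sum.swap)
  also have "\<dots> = Pf a (Pf b f) x" unfolding Pf_def by (simp add: sum_distrib_left mult.assoc)
  finally show ?thesis .
qed

lemma Pf_0: "x \<in> S \<Longrightarrow> Pf 0 f x = f x"
  unfolding Pf_def using fin by (simp add: delta_sum)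

lemma Pf_1: "x \<in> S \<Longrightarrow> Pf (Suc 0) f x = (\<Sum>w\<in>S. P x w * f w)"
  unfolding Pf_def by (intro sum.cong refl) (simp add: mpow_one del: mpow.simps)

lemma Pf_mean: "(\<Sum>x\<in>S. \<pi> x * Pf n f x) = (\<Sum>y\<in>S. \<pi> y * f y)"
proof -
  have "(\<Sum>x\<in>S. \<pi> x * Pf n f x) = (\<Sum>x\<in>S. \<Sum>y\<in>S. \<pi> x * mpow S P n x y * f y)"
    unfolding Pf_def by (simp add: sum_distrib_left mult.assoc)
  also have "\<dots> = (\<Sum>y\<in>S. \<Sum>x\<in>S. \<pi> x * mpow S P n x y * f y)" by (rule sum.swap)
  also have "\<dots> = (\<Sum>y\<in>S. (\<Sum>x\<in>S. \<pi> x * mpow S P n x y) * f y)" by (simp add: sum_distrib_right)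
  also have "\<dots> = (\<Sum>y\<in>S. \<pi> y * f y)" by (simp add: mpow_stat del: mpow.simps)
  finally show ?thesis .
qed

lemma Pf_lb: assumes "x \<in> S" "\<And>y. y \<in> S \<Longrightarrow> a \<le> f y" shows "a \<le> Pf n f x"
proof -
  have "a = (\<Sum>w\<in>S. mpow S P n x w * a)" using mpow_row[OF assms(1)] by (simp add: sum_distrib_right[symmetric])
  also have "\<dots> \<le> Pf n f x" unfolding Pf_def
    by (intro sum_mono mult_left_mono assms(2) mpow_nonneg)
  finally show ?thesis .
qed

lemma Pf_neg: "Pf n (\<lambda>y. - f y) x = - Pf n f x"
  unfolding Pf_def by (simp add: sum_negf)

lemma Pf_ub: assumes "x \<in> S" "\<And>y. y \<in> S \<Longrightarrow> f y \<le> b" shows "Pf n f x \<le> b"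
  using Pf_lb[of x "-b" "\<lambda>y. - f y" n] assms by (simp add: Pf_neg)

definition tot :: "(nat \<Rightarrow> nat set) \<Rightarrow> nat \<Rightarrow> nat \<Rightarrow> real" where
  "tot A x t = (\<Sum>y\<in>S. survive S P A x t y)"

lemma surv_nonneg: "y \<in> S \<Longrightarrow> survive S P A x t y \<ge> 0"
proof (induction t arbitrary: y)
  case 0 then show ?case by simp
next
  case (Suc t) then show ?case by (auto intro!: sum_nonneg mult_nonneg_nonneg P_nonneg)
qed

lemma surv_A: "y \<in> A t \<Longrightarrow> survive S P A x t y = 0"
  by (cases t) auto

lemma tot_nonneg: "tot A x t \<ge> 0"
  unfolding tot_def by (intro sum_nonneg surv_nonneg)

lemma Q_sum: "(\<Sum>w\<in>S. \<Sum>z\<in>S. survive S P A x t z * P z w) = tot A x t"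
proof -
  have "(\<Sum>w\<in>S. \<Sum>z\<in>S. survive S P A x t z * P z w) = (\<Sum>z\<in>S. \<Sum>w\<in>S. survive S P A x t z * P z w)"
    by (rule sum.swap)
  also have "\<dots> = (\<Sum>z\<in>S. survive S P A x t z * (\<Sum>w\<in>S. P z w))" by (simp add: sum_distrib_left)
  also have "\<dots> = tot A x t" unfolding tot_def by (simp add: P_row)
  finally show ?thesis .
qed

lemma tot_Suc_le: "tot A x (Suc t) \<le> tot A x t"
proof -
  have "tot A x (Suc t) \<le> (\<Sum>w\<in>S. \<Sum>z\<in>S. survive S P A x t z * P z w)"
    unfolding tot_def by (intro sum_mono) (auto intro!: sum_nonneg mult_nonneg_nonneg P_nonneg surv_nonneg)
  then show ?thesis using Q_sum by simp
qed

lemma tot_mono: "t \<le> t' \<Longrightarrow> tot A x t' \<le> tot A x t"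
proof (induction t' rule: dec_induct)
  case base then show ?case by simp
next
  case (step n) then show ?case using tot_Suc_le[of A x n] by linarith
qed

lemma exp_ge: "ennreal (\<Sum>t<N. tot A x t) \<le> exp_hit S P A x"
proof -
  have "(\<Sum>t<N. ennreal (tot A x t)) \<le> (\<Sum>t. ennreal (tot A x t))"
    by (rule sum_le_suminf[OF summableI]) auto
  then show ?thesis unfolding exp_hit_def tot_def[symmetric] by (simp add: tot_nonneg)
qed

lemma exp_le: assumes "\<And>M. (\<Sum>t<M. tot A x t) \<le> B" shows "exp_hit S P A x \<le> ennreal B"
proof -
  have "exp_hit S P A x = (SUP M. \<Sum>t<M. ennreal (tot A x t))"
    unfolding exp_hit_def tot_def[symmetric] by (rule suminf_eq_SUP)
  also have "\<dots> \<le> ennreal B"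
  proof (rule SUP_least)
    fix M
    have "(\<Sum>t<M. ennreal (tot A x t)) = ennreal (\<Sum>t<M. tot A x t)" by (simp add: tot_nonneg)
    also have "\<dots> \<le> ennreal B" using assms by (intro ennreal_leI) 
    finally show "(\<Sum>t<M. ennreal (tot A x t)) \<le> ennreal B" .
  qed
  finally show ?thesis .
qed

lemma hit_lb:
  assumes y: "y \<in> S"
    and harm: "\<And>r z. r < m \<Longrightarrow> z \<in> S \<Longrightarrow> g r z = (\<Sum>w\<in>S. P z w * g (Suc r) w)"
    and inA: "\<And>r z. r \<le> m \<Longrightarrow> z \<in> S \<Longrightarrow> z \<in> A r \<Longrightarrow> c \<le> g r z"
  shows "j \<le> m \<Longrightarrow> c * (1 - tot A y j) + (\<Sum>z\<in>S. survive S P A y j z * g j z) \<le> g 0 y"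
proof (induction j)
  case 0
  show ?case
  proof (cases "y \<in> A 0")
    case True
    then have e: "\<And>z. survive S P A y 0 z = 0" by auto
    then have "tot A y 0 = 0" "(\<Sum>z\<in>S. survive S P A y 0 z * g 0 z) = 0" unfolding tot_def by simp_all
    then show ?thesis using inA[of 0 y] True y by simp
  next
    case False
    have e: "\<And>z. survive S P A y 0 z = (if y = z then 1 else 0)" using False by auto
    have "tot A y 0 = 1" unfolding tot_def e using delta_sum[OF fin y, of "\<lambda>_. 1"] by simp
    moreover have "(\<Sum>z\<in>S. survive S P A y 0 z * g 0 z) = g 0 y" unfolding e by (rule delta_sum[OF fin y])
    ultimately show ?thesis by simp
  qed
next
  case (Suc j)
  then have jm: "j < m" by simp
  define Q where "Q w = (\<Sum>z\<in>S. survive S P A y j z * P z w)" for w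
  have Qnn: "Q w \<ge> 0" if "w \<in> S" for w
    unfolding Q_def using that by (auto intro!: sum_nonneg mult_nonneg_nonneg P_nonneg surv_nonneg)
  have "(\<Sum>z\<in>S. survive S P A y j z * g j z) = (\<Sum>z\<in>S. \<Sum>w\<in>S. survive S P A y j z * P z w * g (Suc j) w)"
    using harm[OF jm] by (simp add: sum_distrib_left mult.assoc)
  also have "\<dots> = (\<Sum>w\<in>S. \<Sum>z\<in>S. survive S P A y j z * P z w * g (Suc j) w)" by (rule sum.swap)
  also have "\<dots> = (\<Sum>w\<in>S. Q w * g (Suc j) w)" unfolding Q_def by (simp add: sum_distrib_right)
  also have "\<dots> \<ge> (\<Sum>w\<in>S. c * (Q w - survive S P A y (Suc j) w) + survive S P A y (Suc j) w * g (Suc j) w)"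
  proof (rule sum_mono)
    fix w assume w: "w \<in> S"
    show "c * (Q w - survive S P A y (Suc j) w) + survive S P A y (Suc j) w * g (Suc j) w \<le> Q w * g (Suc j) w"
    proof (cases "w \<in> A (Suc j)")
      case True
      then have "c \<le> g (Suc j) w" using inA[of "Suc j" w] Suc.prems w by simp
      then have "c * Q w \<le> g (Suc j) w * Q w" using Qnn[OF w] by (rule mult_right_mono)
      then show ?thesis using True by (simp add: mult.commute)
    next
      case False
      then show ?thesis by (simp add: Q_def)
    qed
  qed
  finally have "(\<Sum>z\<in>S. survive S P A y j z * g j z) \<ge> c * (tot A y j - tot A y (Suc j)) + (\<Sum>w\<in>S. survive S P A y (Suc j) w * g (Suc j) w)"
    using Q_sum[of A y j] unfolding Q_def tot_def
    by (simp add: sum.distrib sum_subtractf sum_distrib_left[symmetric])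
  then show ?case using Suc.IH jm by (simp add: algebra_simps)
qed

lemma hit_lb2:
  assumes y: "y \<in> S"
    and harm: "\<And>r z. r < m \<Longrightarrow> z \<in> S \<Longrightarrow> g r z = (\<Sum>w\<in>S. P z w * g (Suc r) w)"
    and inA: "\<And>r z. r \<le> m \<Longrightarrow> z \<in> S \<Longrightarrow> z \<in> A r \<Longrightarrow> c \<le> g r z"
    and lo: "\<And>z. z \<in> S \<Longrightarrow> a \<le> g m z" and ca: "c \<le> a + W" and W: "0 \<le> W"
    and tp: "tot A y m \<le> p"
  shows "c - p * W \<le> g 0 y"
proof -
  have 1: "c * (1 - tot A y m) + (\<Sum>z\<in>S. survive S P A y m z * g m z) \<le> g 0 y"
    using hit_lb[of y m g A c m, OF y harm inA] by blast
  have "(\<Sum>z\<in>S. survive S P A y m z * a) \<le> (\<Sum>z\<in>S. survive S P A y m z * g m z)"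
    by (intro sum_mono mult_left_mono lo surv_nonneg)
  then have 2: "a * tot A y m \<le> (\<Sum>z\<in>S. survive S P A y m z * g m z)"
    unfolding tot_def by (simp add: sum_distrib_left[symmetric] mult.commute)
  have 3: "tot A y m * (c - a) \<le> p * W"
  proof (cases "c - a \<ge> 0")
    case True
    then show ?thesis using tp ca tot_nonneg[of A y m] by (intro mult_mono) auto
  next
    case False
    then have "tot A y m * (c - a) \<le> 0" using tot_nonneg[of A y m] by (simp add: mult_nonneg_nonpos)
    moreover have "0 \<le> p * W" using tp tot_nonneg[of A y m] W by simp
    ultimately show ?thesis by linarith
  qed
  show ?thesis using 1 2 3 by (simp add: algebra_simps)
qed

lemma quant:
  assumes a0: "0 < \<alpha>" and a1: "\<alpha> < 1"
    and fU: "\<And>z. z \<in> S \<Longrightarrow> f z \<le> U"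
    and mu: "\<mu> = (\<Sum>z\<in>S. \<pi> z * f z)"
  shows "\<alpha> \<le> sum \<pi> {z\<in>S. \<mu> - \<alpha> / (1 - \<alpha>) * (U - \<mu>) \<le> f z}"
proof -
  define \<beta> where "\<beta> = \<alpha> / (1 - \<alpha>)"
  define c where "c = \<mu> - \<beta> * (U - \<mu>)"
  define H where "H = {z\<in>S. c \<le> f z}"
  define L where "L = {z\<in>S. f z < c}"
  have SHL: "S = H \<union> L" "H \<inter> L = {}" unfolding H_def L_def by auto
  have fH: "finite H" "finite L" using fin unfolding H_def L_def by auto
  have sumsplit: "sum g S = sum g H + sum g L" for g :: "nat \<Rightarrow> real"
    using sum.union_disjoint[OF fH SHL(2), of g] SHL(1) by simp
  have qL: "sum \<pi> L = 1 - sum \<pi> H" using sumsplit[of \<pi>] pi_sum by simp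
  have muU: "\<mu> \<le> U"
  proof -
    have "\<mu> \<le> (\<Sum>z\<in>S. \<pi> z * U)" unfolding mu by (intro sum_mono mult_left_mono fU pi_nonneg)
    then show ?thesis by (simp add: sum_distrib_right[symmetric] pi_sum)
  qed
  have Hle: "(\<Sum>z\<in>H. \<pi> z * f z) \<le> (\<Sum>z\<in>H. \<pi> z * U)"
    by (intro sum_mono mult_left_mono fU pi_nonneg) (auto simp: H_def)
  have mu2: "\<mu> = (\<Sum>z\<in>H. \<pi> z * f z) + (\<Sum>z\<in>L. \<pi> z * f z)" unfolding mu by (rule sumsplit)
  show ?thesis
  proof (cases "\<mu> < U")
    case True
    have Lle: "(\<Sum>z\<in>L. \<pi> z * f z) \<le> (\<Sum>z\<in>L. \<pi> z * c)"
      by (intro sum_mono mult_left_mono pi_nonneg) (auto simp: L_def)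
    have "\<mu> \<le> sum \<pi> H * U + sum \<pi> L * c"
      using mu2 Hle Lle by (simp add: sum_distrib_right[symmetric])
    then have "\<mu> - c \<le> sum \<pi> H * (U - c)" using qL by (simp add: algebra_simps)
    then have "\<beta> * (U - \<mu>) \<le> sum \<pi> H * ((1 + \<beta>) * (U - \<mu>))" unfolding c_def by (simp add: algebra_simps)
    then have "\<beta> * (U - \<mu>) \<le> (sum \<pi> H * (1 + \<beta>)) * (U - \<mu>)" by (simp add: mult.assoc)
    then have "\<beta> \<le> sum \<pi> H * (1 + \<beta>)" using True by simp
    then have "\<beta> * (1 - \<alpha>) \<le> sum \<pi> H * (1 + \<beta>) * (1 - \<alpha>)" using a1 by (intro mult_right_mono) auto
    moreover have "\<beta> * (1 - \<alpha>) = \<alpha>" "(1 + \<beta>) * (1 - \<alpha>) = 1" using a1 unfolding \<beta>_def by (auto simp: field_simps)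
    ultimately have "\<alpha> \<le> sum \<pi> H" by (simp add: mult.assoc)
    then show ?thesis unfolding H_def c_def \<beta>_def .
  next
    case False
    then have Ueq: "U = \<mu>" using muU by simp
    then have ceq: "c = \<mu>" unfolding c_def by simp
    have "(\<Sum>z\<in>L. \<pi> z * (\<mu> - f z)) \<le> 0"
    proof -
      have m1: "\<mu> = (\<Sum>z\<in>H. \<pi> z * \<mu>) + (\<Sum>z\<in>L. \<pi> z * \<mu>)"
      proof -
        have "(\<Sum>z\<in>S. \<pi> z * \<mu>) = \<mu>" by (simp add: sum_distrib_right[symmetric] pi_sum)
        then show ?thesis using sumsplit[of "\<lambda>z. \<pi> z * \<mu>"] by linarith
      qed
      have m2: "(\<Sum>z\<in>L. \<pi> z * (\<mu> - f z)) = (\<Sum>z\<in>L. \<pi> z * \<mu>) - (\<Sum>z\<in>L. \<pi> z * f z)"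
        by (simp add: right_diff_distrib sum_subtractf)
      have m3: "(\<Sum>z\<in>H. \<pi> z * f z) \<le> (\<Sum>z\<in>H. \<pi> z * \<mu>)" using Hle Ueq by simp
      show ?thesis using m1 m2 m3 mu2 by linarith
    qed
    moreover have nn: "\<forall>z\<in>L. 0 \<le> \<pi> z * (\<mu> - f z)"
      using pi_nonneg by (auto simp: L_def ceq)
    moreover have "0 \<le> (\<Sum>z\<in>L. \<pi> z * (\<mu> - f z))" using nn by (intro sum_nonneg) auto
    ultimately have "(\<Sum>z\<in>L. \<pi> z * (\<mu> - f z)) = 0" by linarith
    then have z0: "\<forall>z\<in>L. \<pi> z * (\<mu> - f z) = 0"
    proof (intro sum_nonneg_eq_0_iff[OF fH(2), THEN iffD1])
      show "\<And>x. x \<in> L \<Longrightarrow> 0 \<le> \<pi> x * (\<mu> - f x)" using nn by blast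
    qed
    have "\<pi> z = 0" if z: "z \<in> L" for z
    proof -
      have "\<mu> - f z > 0" using z unfolding L_def ceq by simp
      moreover have "\<pi> z * (\<mu> - f z) = 0" using z0 z by blast
      ultimately show ?thesis by simp
    qed
    then have "sum \<pi> L = 0" by (intro sum.neutral) blast
    then have "sum \<pi> H = 1" using qL by simp
    then show ?thesis using a1 unfolding H_def c_def \<beta>_def by simp
  qed
qed

lemma mean_le: "(\<And>z. z \<in> S \<Longrightarrow> f z \<le> U) \<Longrightarrow> (\<Sum>z\<in>S. \<pi> z * f z) \<le> U"
proof -
  assume fU: "\<And>z. z \<in> S \<Longrightarrow> f z \<le> U"
  have "(\<Sum>z\<in>S. \<pi> z * f z) \<le> (\<Sum>z\<in>S. \<pi> z * U)" by (intro sum_mono mult_left_mono fU pi_nonneg)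
  then show ?thesis by (simp add: sum_distrib_right[symmetric] pi_sum)
qed

lemma mean_ge: "(\<And>z. z \<in> S \<Longrightarrow> a \<le> f z) \<Longrightarrow> a \<le> (\<Sum>z\<in>S. \<pi> z * f z)"
proof -
  assume fU: "\<And>z. z \<in> S \<Longrightarrow> a \<le> f z"
  have "(\<Sum>z\<in>S. \<pi> z * a) \<le> (\<Sum>z\<in>S. \<pi> z * f z)" by (intro sum_mono mult_left_mono fU pi_nonneg)
  then show ?thesis by (simp add: sum_distrib_right[symmetric] pi_sum)
qed

lemma harm_lb: "z \<in> S \<Longrightarrow> (\<And>w. w \<in> S \<Longrightarrow> a \<le> h w) \<Longrightarrow> a \<le> (\<Sum>w\<in>S. P z w * h w)"
  using Pf_lb[of z a h "Suc 0"] Pf_1[of z h] by simp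

lemma harm_ub: "z \<in> S \<Longrightarrow> (\<And>w. w \<in> S \<Longrightarrow> h w \<le> b) \<Longrightarrow> (\<Sum>w\<in>S. P z w * h w) \<le> b"
  using Pf_ub[of z h b "Suc 0"] Pf_1[of z h] by simp

lemma window_lb:
  assumes a0: "0 < \<alpha>" and a1: "\<alpha> < 1/2"
    and T: "\<And>y A. y \<in> S \<Longrightarrow> A \<in> targets S \<pi> \<alpha> \<Longrightarrow> exp_hit S P A y \<le> ennreal Tr"
    and Tr: "0 \<le> Tr" and Tm: "Tr \<le> (p::real) * (real m + 1)"
    and harm: "\<And>r z. r < m \<Longrightarrow> z \<in> S \<Longrightarrow> g r z = (\<Sum>w\<in>S. P z w * g (Suc r) w)"
    and mean: "\<And>r. r \<le> m \<Longrightarrow> (\<Sum>z\<in>S. \<pi> z * g r z) = \<mu>"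
    and lo: "\<And>z. z \<in> S \<Longrightarrow> a \<le> g m z" and hi: "\<And>z. z \<in> S \<Longrightarrow> g m z \<le> a + W"
    and W: "0 \<le> W"
    and y: "y \<in> S"
  shows "\<mu> - \<alpha> / (1 - \<alpha>) * (a + W - \<mu>) - p * W \<le> g 0 y"
proof -
  define \<beta> where "\<beta> = \<alpha> / (1 - \<alpha>)"
  have b0: "0 \<le> \<beta>" unfolding \<beta>_def using a0 a1 by simp
  have bnd: "a \<le> g (m - i) z \<and> g (m - i) z \<le> a + W" if "z \<in> S" for i z
    using that
  proof (induction i arbitrary: z)
    case 0 then show ?case using lo hi by simp
  next
    case (Suc i)
    show ?case
    proof (cases "i < m")
      case True
      then have e: "m - Suc i = Suc (m - Suc i) - 1" "Suc (m - Suc i) = m - i" by auto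
      have "g (m - Suc i) z = (\<Sum>w\<in>S. P z w * g (m - i) w)"
        using harm[of "m - Suc i" z] Suc.prems True e(2) by simp
      then show ?thesis using harm_lb[OF Suc.prems, of a "g (m - i)"] harm_ub[OF Suc.prems, of "g (m - i)" "a + W"] Suc.IH
        by simp
    next
      case False
      then have "m - Suc i = m - i" by simp
      then show ?thesis using Suc by simp
    qed
  qed
  have bnd': "a \<le> g r z \<and> g r z \<le> a + W" if "r \<le> m" "z \<in> S" for r z
    using bnd[of z "m - r"] that by simp
  have muU: "\<mu> \<le> a + W" using mean[of 0] mean_le[of "g 0" "a + W"] bnd'[of 0] by simp
  define c where "c = \<mu> - \<beta> * (a + W - \<mu>)"
  have "0 \<le> \<beta> * (a + W - \<mu>)" using b0 muU by simp
  then have cle: "c \<le> a + W" unfolding c_def using muU by linarith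
  define A where "A r = (if r \<le> m then {z\<in>S. c \<le> g r z} else S)" for r
  have Atg: "A \<in> targets S \<pi> \<alpha>"
    unfolding targets_def
  proof (safe)
    fix t
    show "\<And>x. x \<in> A t \<Longrightarrow> x \<in> S" unfolding A_def by (auto split: if_splits)
    show "\<alpha> \<le> sum \<pi> (A t)"
    proof (cases "t \<le> m")
      case True
      have "\<alpha> \<le> sum \<pi> {z\<in>S. \<mu> - \<alpha> / (1 - \<alpha>) * (a + W - \<mu>) \<le> g t z}"
        using quant[of \<alpha> "g t" "a + W" \<mu>] a0 a1 bnd'[OF True] mean[OF True] by simp
      then show ?thesis using True unfolding A_def c_def \<beta>_def by simp
    next
      case False
      then show ?thesis unfolding A_def using pi_sum a1 by simp
    qed
  qed
  have tp: "tot A y m \<le> p"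
  proof -
    have "ennreal (\<Sum>t<Suc m. tot A y t) \<le> ennreal Tr" using exp_ge[where N="Suc m" and A=A and x=y] T[OF y Atg] by simp
    then have s1: "(\<Sum>t<Suc m. tot A y t) \<le> Tr" using Tr by simp
    have "(\<Sum>t<Suc m. tot A y m) \<le> (\<Sum>t<Suc m. tot A y t)" by (intro sum_mono tot_mono) simp
    then have "(real m + 1) * tot A y m \<le> Tr" using s1 by (simp add: add.commute)
    then have h: "(real m + 1) * tot A y m \<le> (real m + 1) * p" using Tm by (metis mult.commute order_trans)
    show ?thesis by (rule mult_left_le_imp_le[OF h]) simp
  qed
  have "c - p * W \<le> g 0 y"
  proof (rule hit_lb2[where y=y and m=m and g=g and A=A and c=c and a=a and W=W and p=p, OF y harm])
    show "\<And>r z. r \<le> m \<Longrightarrow> z \<in> S \<Longrightarrow> z \<in> A r \<Longrightarrow> c \<le> g r z" unfolding A_def by simp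
  qed (use lo cle W tp in auto)
  then show ?thesis unfolding c_def \<beta>_def .
qed

lemma window_diff:
  assumes a0: "0 < \<alpha>" and a1: "\<alpha> < 1/2"
    and T: "\<And>y A. y \<in> S \<Longrightarrow> A \<in> targets S \<pi> \<alpha> \<Longrightarrow> exp_hit S P A y \<le> ennreal Tr"
    and Tr: "0 \<le> Tr" and Tm: "Tr \<le> (p::real) * (real m + 1)"
    and harm: "\<And>r z. r < m \<Longrightarrow> z \<in> S \<Longrightarrow> g r z = (\<Sum>w\<in>S. P z w * g (Suc r) w)"
    and mean: "\<And>r. r \<le> m \<Longrightarrow> (\<Sum>z\<in>S. \<pi> z * g r z) = \<mu>"
    and lo: "\<And>z. z \<in> S \<Longrightarrow> a \<le> g m z" and hi: "\<And>z. z \<in> S \<Longrightarrow> g m z \<le> a + W"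
    and W: "0 \<le> W"
    and y1: "y1 \<in> S" and y2: "y2 \<in> S"
  shows "g 0 y1 - g 0 y2 \<le> (\<alpha> / (1 - \<alpha>) + 2 * p) * W"
proof -
  define \<beta> where "\<beta> = \<alpha> / (1 - \<alpha>)"
  have L: "\<mu> - \<beta> * (a + W - \<mu>) - p * W \<le> g 0 y2"
    unfolding \<beta>_def by (rule window_lb[OF a0 a1 T Tr Tm harm mean lo hi W y2])
  have "(- \<mu>) - \<beta> * ((- (a + W)) + W - (- \<mu>)) - p * W \<le> - g 0 y1"
    unfolding \<beta>_def
  proof (rule window_lb[OF a0 a1 T Tr Tm, where g="\<lambda>r z. - g r z"])
    show "\<And>r z. r < m \<Longrightarrow> z \<in> S \<Longrightarrow> - g r z = (\<Sum>w\<in>S. P z w * - g (Suc r) w)"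
      using harm by (simp add: sum_negf)
    show "\<And>r. r \<le> m \<Longrightarrow> (\<Sum>z\<in>S. \<pi> z * - g r z) = - \<mu>"
      using mean by (simp add: sum_negf)
  qed (use lo hi W y1 in \<open>auto simp: add.commute[of a W] dest: hi\<close>)
  then have U: "g 0 y1 \<le> \<mu> + \<beta> * (\<mu> - a) + p * W" by (simp add: algebra_simps)
  have "\<beta> * (\<mu> - a) + \<beta> * (a + W - \<mu>) = \<beta> * W" by (simp add: algebra_simps)
  then show ?thesis using L U unfolding \<beta>_def[symmetric] by (simp add: algebra_simps)
qed

lemma Pf_Suc: "z \<in> S \<Longrightarrow> Pf (Suc n) f z = (\<Sum>w\<in>S. P z w * Pf n f w)"
  using Pf_add[of "Suc 0" n f z] Pf_1[of z "Pf n f"] by simp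

lemma iter:
  assumes a0: "0 < \<alpha>" and a1: "\<alpha> < 1/2"
    and T: "\<And>y A. y \<in> S \<Longrightarrow> A \<in> targets S \<pi> \<alpha> \<Longrightarrow> exp_hit S P A y \<le> ennreal Tr"
    and Tr: "0 \<le> Tr" and Tm: "Tr \<le> (p::real) * (real m + 1)"
    and ne: "S \<noteq> {}"
    and f: "\<And>y. y \<in> S \<Longrightarrow> 0 \<le> f y \<and> f y \<le> 1"
  shows "\<exists>a. \<forall>z\<in>S. a \<le> Pf (i * m) f z \<and> Pf (i * m) f z \<le> a + (\<alpha> / (1 - \<alpha>) + 2 * p) ^ i"
proof (induction i)
  case 0
  show ?case by (rule exI[of _ 0]) (simp add: Pf_0 f)
next
  case (Suc i)
  define \<theta> where "\<theta> = \<alpha> / (1 - \<alpha>) + 2 * p"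
  from Suc.IH obtain a where a: "\<forall>z\<in>S. a \<le> Pf (i * m) f z \<and> Pf (i * m) f z \<le> a + \<theta> ^ i"
    unfolding \<theta>_def by blast
  define g where "g r = Pf (Suc i * m - r) f" for r
  have gm: "g m = Pf (i * m) f" unfolding g_def by simp
  have g0: "g 0 = Pf (Suc i * m) f" unfolding g_def by simp
  have W: "0 \<le> \<theta> ^ i"
  proof -
    obtain z where "z \<in> S" using ne by blast
    then show ?thesis using a by force
  qed
  have diff: "g 0 y1 - g 0 y2 \<le> \<theta> * \<theta> ^ i" if "y1 \<in> S" "y2 \<in> S" for y1 y2
    unfolding \<theta>_def
  proof (rule window_diff[OF a0 a1 T Tr Tm, where \<mu>="\<Sum>z\<in>S. \<pi> z * f z" and a=a])
    show "\<And>r z. r < m \<Longrightarrow> z \<in> S \<Longrightarrow> g r z = (\<Sum>w\<in>S. P z w * g (Suc r) w)"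
    proof -
      fix r z assume "r < m" "z \<in> S"
      then have "Suc i * m - r = Suc (Suc i * m - Suc r)" by (simp add: Suc_diff_Suc trans_less_add1)
      then show "g r z = (\<Sum>w\<in>S. P z w * g (Suc r) w)" unfolding g_def using Pf_Suc \<open>z \<in> S\<close> by simp
    qed
    show "\<And>r. r \<le> m \<Longrightarrow> (\<Sum>z\<in>S. \<pi> z * g r z) = (\<Sum>z\<in>S. \<pi> z * f z)"
      unfolding g_def by (rule Pf_mean)
  qed (use a gm W that in \<open>auto simp: \<theta>_def\<close>)
  define a' where "a' = Min (g 0 ` S)"
  have "a' \<in> g 0 ` S" unfolding a'_def using fin ne by (intro Min_in) auto
  then obtain y0 where y0: "y0 \<in> S" "a' = g 0 y0" by blast
  have "\<forall>z\<in>S. a' \<le> g 0 z \<and> g 0 z \<le> a' + \<theta> ^ Suc i"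
  proof
    fix z assume z: "z \<in> S"
    have "a' \<le> g 0 z" unfolding a'_def using fin z by (intro Min_le) auto
    moreover have "g 0 z \<le> a' + \<theta> ^ Suc i" using diff[OF z y0(1)] y0(2) by simp
    ultimately show "a' \<le> g 0 z \<and> g 0 z \<le> a' + \<theta> ^ Suc i" by simp
  qed
  then show ?case unfolding g0 \<theta>_def by blast
qed

lemma tv_eq:
  fixes t :: nat
  assumes x: "x \<in> S"
  defines "f \<equiv> (\<lambda>y. if mpow S P t x y < \<pi> y then 1 else 0 :: real)"
  shows "tv S (mpow S P t x) \<pi> = (\<Sum>y\<in>S. \<pi> y * f y) - Pf t f x"
proof -
  define B where "B = {y\<in>S. mpow S P t x y < \<pi> y}"
  have fB: "finite B" "finite (S - B)" using fin unfolding B_def by auto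
  have SB: "S = B \<union> (S - B)" "B \<inter> (S - B) = {}" unfolding B_def by auto
  have split: "sum g S = sum g B + sum g (S - B)" for g :: "nat \<Rightarrow> real"
    using sum.union_disjoint[OF fB SB(2), of g] SB(1) by simp
  have z: "(\<Sum>y\<in>S. mpow S P t x y - \<pi> y) = 0" using mpow_row[OF x] pi_sum by (simp add: sum_subtractf)
  have "(\<Sum>y\<in>S. \<bar>mpow S P t x y - \<pi> y\<bar>) = (\<Sum>y\<in>B. \<pi> y - mpow S P t x y) + (\<Sum>y\<in>S - B. mpow S P t x y - \<pi> y)"
    using split[of "\<lambda>y. \<bar>mpow S P t x y - \<pi> y\<bar>"]
    by (simp add: B_def) (intro arg_cong2[where f="(+)"] sum.cong, auto)
  also have "(\<Sum>y\<in>S - B. mpow S P t x y - \<pi> y) = (\<Sum>y\<in>B. \<pi> y - mpow S P t x y)"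
    using z split[of "\<lambda>y. mpow S P t x y - \<pi> y"] by (simp add: sum_subtractf)
  finally have tv1: "tv S (mpow S P t x) \<pi> = (\<Sum>y\<in>B. \<pi> y - mpow S P t x y)" unfolding tv_def by simp
  have e1: "(\<Sum>y\<in>S. \<pi> y * f y) = (\<Sum>y\<in>B. \<pi> y)"
    using split[of "\<lambda>y. \<pi> y * f y"] unfolding f_def B_def by simp
  have e2: "Pf t f x = (\<Sum>y\<in>B. mpow S P t x y)"
    using split[of "\<lambda>y. mpow S P t x y * f y"] unfolding Pf_def f_def B_def by simp
  show ?thesis using tv1 e1 e2 by (simp add: sum_subtractf)
qed

lemma mix_bound:
  assumes a0: "0 < \<alpha>" and a1: "\<alpha> < 1/2"
    and T: "\<And>y A. y \<in> S \<Longrightarrow> A \<in> targets S \<pi> \<alpha> \<Longrightarrow> exp_hit S P A y \<le> ennreal Tr"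
    and Tr: "0 \<le> Tr" and Tm: "Tr \<le> (p::real) * (real m + 1)"
    and ne: "S \<noteq> {}"
  shows "dmix S P \<pi> (i * m) \<le> (\<alpha> / (1 - \<alpha>) + 2 * p) ^ i"
proof -
  have "\<forall>x\<in>S. tv S (mpow S P (i * m) x) \<pi> \<le> (\<alpha> / (1 - \<alpha>) + 2 * p) ^ i"
  proof
  fix x assume x: "x \<in> S"
  define f where "f = (\<lambda>y. if mpow S P (i * m) x y < \<pi> y then 1 else 0 :: real)"
  have tv: "tv S (mpow S P (i * m) x) \<pi> = (\<Sum>y\<in>S. \<pi> y * f y) - Pf (i * m) f x"
    unfolding f_def by (rule tv_eq[OF x])
  have "\<exists>a. \<forall>z\<in>S. a \<le> Pf (i * m) f z \<and> Pf (i * m) f z \<le> a + (\<alpha> / (1 - \<alpha>) + 2 * p) ^ i"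
    by (rule iter[OF a0 a1 T Tr Tm ne]) (auto simp: f_def)
  then obtain a where a: "\<forall>z\<in>S. a \<le> Pf (i * m) f z \<and> Pf (i * m) f z \<le> a + (\<alpha> / (1 - \<alpha>) + 2 * p) ^ i"
    by blast
  have "(\<Sum>y\<in>S. \<pi> y * f y) = (\<Sum>y\<in>S. \<pi> y * Pf (i * m) f y)" by (rule Pf_mean[symmetric])
  also have "\<dots> \<le> a + (\<alpha> / (1 - \<alpha>) + 2 * p) ^ i" using a by (intro mean_le) auto
  finally show "tv S (mpow S P (i * m) x) \<pi> \<le> (\<alpha> / (1 - \<alpha>) + 2 * p) ^ i" using tv a x by force
  qed
  then show ?thesis unfolding dmix_def using fin ne by (subst Max_le_iff) auto
qed

lemma contract1:
  assumes d: "dmix S P \<pi> t0 \<le> 1/4" and ne: "S \<noteq> {}"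
    and f: "\<And>z. z \<in> S \<Longrightarrow> a \<le> f z \<and> f z \<le> a + W"
    and x: "x \<in> S" and y: "y \<in> S"
  shows "Pf t0 f x - Pf t0 f y \<le> W / 2"
proof -
  define c where "c = a + W / 2"
  define d where "d w = mpow S P t0 x w - mpow S P t0 y w" for w
  have sd: "sum d S = 0" unfolding d_def using mpow_row[OF x] mpow_row[OF y] by (simp add: sum_subtractf)
  have "Pf t0 f x - Pf t0 f y = (\<Sum>w\<in>S. d w * f w)"
    unfolding Pf_def d_def by (simp add: sum_subtractf left_diff_distrib)
  also have "\<dots> = (\<Sum>w\<in>S. d w * (f w - c))"
    using sd by (simp add: right_diff_distrib sum_subtractf sum_distrib_right[symmetric])
  also have "\<dots> \<le> (\<Sum>w\<in>S. \<bar>d w\<bar> * (W / 2))"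
  proof (rule sum_mono)
    fix w assume w: "w \<in> S"
    have "-(W/2) \<le> f w - c" "f w - c \<le> W / 2" using f[OF w] unfolding c_def by auto
    then have "\<bar>f w - c\<bar> \<le> W / 2" by (intro abs_leI) linarith+
    then have "\<bar>d w\<bar> * \<bar>f w - c\<bar> \<le> \<bar>d w\<bar> * (W / 2)" by (rule mult_left_mono) simp
    then have "\<bar>d w * (f w - c)\<bar> \<le> \<bar>d w\<bar> * (W / 2)" by (simp add: abs_mult)
    then show "d w * (f w - c) \<le> \<bar>d w\<bar> * (W / 2)" by simp
  qed
  also have "\<dots> = (\<Sum>w\<in>S. \<bar>d w\<bar>) * (W / 2)" by (simp add: sum_distrib_right)
  also have "\<dots> \<le> 1 * (W / 2)"
  proof (rule mult_right_mono)
    have W: "0 \<le> W" using f x by force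
    have "(\<Sum>w\<in>S. \<bar>d w\<bar>) \<le> (\<Sum>w\<in>S. \<bar>mpow S P t0 x w - \<pi> w\<bar> + \<bar>mpow S P t0 y w - \<pi> w\<bar>)"
      unfolding d_def by (intro sum_mono) linarith
    also have "\<dots> = 2 * tv S (mpow S P t0 x) \<pi> + 2 * tv S (mpow S P t0 y) \<pi>"
      unfolding tv_def by (simp add: sum.distrib)
    also have "\<dots> \<le> 2 * (1/4) + 2 * (1/4)"
    proof -
      have "tv S (mpow S P t0 x) \<pi> \<le> dmix S P \<pi> t0" "tv S (mpow S P t0 y) \<pi> \<le> dmix S P \<pi> t0"
        unfolding dmix_def using fin x y by (auto intro!: Max_ge)
      then show ?thesis using d by linarith
    qed
    finally show "(\<Sum>w\<in>S. \<bar>d w\<bar>) \<le> 1" by simp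
    show "0 \<le> W / 2" using f x by force
  qed
  finally show ?thesis by simp
qed

lemma contract_iter:
  assumes d: "dmix S P \<pi> t0 \<le> 1/4" and ne: "S \<noteq> {}"
    and f: "\<And>z. z \<in> S \<Longrightarrow> a \<le> f z \<and> f z \<le> a + W"
  shows "\<exists>b. \<forall>z\<in>S. b \<le> Pf (j * t0) f z \<and> Pf (j * t0) f z \<le> b + W / 2 ^ j"
proof (induction j)
  case 0 then show ?case using f by (intro exI[of _ a]) (simp add: Pf_0)
next
  case (Suc j)
  then obtain b where b: "\<forall>z\<in>S. b \<le> Pf (j * t0) f z \<and> Pf (j * t0) f z \<le> b + W / 2 ^ j" by blast
  define g where "g = Pf (Suc j * t0) f"
  have g: "g z = Pf t0 (Pf (j * t0) f) z" for z unfolding g_def using Pf_add[of t0 "j * t0" f z] by simp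
  have diff: "g x - g y \<le> W / 2 ^ Suc j" if "x \<in> S" "y \<in> S" for x y
    using contract1[OF d ne, where a=b and W="W / 2 ^ j" and f="Pf (j * t0) f", OF _ that] b unfolding g by simp
  define a' where "a' = Min (g ` S)"
  have "a' \<in> g ` S" unfolding a'_def using fin ne by (intro Min_in) auto
  then obtain y0 where y0: "y0 \<in> S" "a' = g y0" by blast
  have "\<forall>z\<in>S. a' \<le> g z \<and> g z \<le> a' + W / 2 ^ Suc j"
  proof
    fix z assume z: "z \<in> S"
    have "a' \<le> g z" unfolding a'_def using fin z by (intro Min_le) auto
    moreover have "g z \<le> a' + W / 2 ^ Suc j" using diff[OF z y0(1)] y0(2) by simp
    ultimately show "a' \<le> g z \<and> g z \<le> a' + W / 2 ^ Suc j" by simp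
  qed
  then show ?case unfolding g_def by blast
qed

lemma ind_sum: "A' \<subseteq> S \<Longrightarrow> (\<Sum>y\<in>S. g y * (if y \<in> A' then 1 else 0)) = sum g A'" for g :: "nat \<Rightarrow> real"
proof -
  assume A: "A' \<subseteq> S"
  have "(\<Sum>y\<in>S. g y * (if y \<in> A' then 1 else 0)) = (\<Sum>y\<in>S. if y \<in> A' then g y else 0)"
    by (rule sum.cong) auto
  also have "\<dots> = sum g (S \<inter> A')" using fin by (simp add: sum.inter_restrict)
  also have "S \<inter> A' = A'" using A by auto
  finally show ?thesis .
qed

lemma surv_prop: "y \<in> S \<Longrightarrow> survive S P A x (t + j) y \<le> (\<Sum>z\<in>S. survive S P A x t z * mpow S P j z y)"
proof (induction j arbitrary: y)
  case 0
  have "(\<Sum>z\<in>S. survive S P A x t z * mpow S P 0 z y) = (\<Sum>z\<in>S. survive S P A x t z * (if z \<in> {y} then 1 else 0))"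
    by (rule sum.cong) auto
  also have "\<dots> = survive S P A x t y" using ind_sum[of "{y}"] 0 by simp
  finally show ?case by simp
next
  case (Suc j)
  have "survive S P A x (t + Suc j) y \<le> (\<Sum>w\<in>S. survive S P A x (t + j) w * P w y)"
    using Suc.prems by (auto intro!: sum_nonneg mult_nonneg_nonneg P_nonneg surv_nonneg)
  also have "\<dots> \<le> (\<Sum>w\<in>S. (\<Sum>z\<in>S. survive S P A x t z * mpow S P j z w) * P w y)"
    using Suc by (intro sum_mono mult_right_mono P_nonneg) auto
  also have "\<dots> = (\<Sum>w\<in>S. \<Sum>z\<in>S. survive S P A x t z * mpow S P j z w * P w y)"
    by (simp add: sum_distrib_right)
  also have "\<dots> = (\<Sum>z\<in>S. \<Sum>w\<in>S. survive S P A x t z * mpow S P j z w * P w y)" by (rule sum.swap)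
  also have "\<dots> = (\<Sum>z\<in>S. survive S P A x t z * mpow S P (Suc j) z y)"
    by (simp add: sum_distrib_left mult.assoc)
  finally show ?case .
qed

lemma block:
  assumes AS: "A (t + n) \<subseteq> S"
    and h: "\<And>z. z \<in> S \<Longrightarrow> q \<le> (\<Sum>y\<in>A (t + n). mpow S P n z y)"
  shows "tot A x (t + n) \<le> (1 - q) * tot A x t"
proof -
  define A' where "A' = A (t + n)"
  have fA: "finite A'" using AS fin unfolding A'_def by (auto intro: finite_subset)
  have "tot A x (t + n) = (\<Sum>y\<in>S - A'. survive S P A x (t + n) y)"
    unfolding tot_def A'_def using fin by (intro sum.mono_neutral_right) (auto simp: surv_A)
  also have "\<dots> \<le> (\<Sum>y\<in>S - A'. \<Sum>z\<in>S. survive S P A x t z * mpow S P n z y)"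
    by (intro sum_mono surv_prop) auto
  also have "\<dots> = (\<Sum>z\<in>S. survive S P A x t z * (\<Sum>y\<in>S - A'. mpow S P n z y))"
    by (simp add: sum_distrib_left sum.swap[of _ "S - A'" S])
  also have "\<dots> \<le> (\<Sum>z\<in>S. survive S P A x t z * (1 - q))"
  proof (intro sum_mono mult_left_mono surv_nonneg)
    fix z assume z: "z \<in> S"
    have "(\<Sum>y\<in>S - A'. mpow S P n z y) = (\<Sum>y\<in>S. mpow S P n z y) - (\<Sum>y\<in>A'. mpow S P n z y)"
      using AS fin unfolding A'_def by (simp add: sum_diff)
    then show "(\<Sum>y\<in>S - A'. mpow S P n z y) \<le> 1 - q" using h[OF z] mpow_row[OF z] unfolding A'_def by simp
  qed
  also have "\<dots> = (1 - q) * tot A x t" unfolding tot_def by (simp add: sum_distrib_left mult.commute)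
  finally show ?thesis .
qed

lemma tot0: "tot A x 0 \<le> 1"
proof -
  have "tot A x 0 \<le> (\<Sum>y\<in>S. (if y \<in> {x} then 1 else 0) * 1)"
    unfolding tot_def by (intro sum_mono) auto
  also have "\<dots> \<le> 1"
  proof (cases "x \<in> S")
    case True then show ?thesis using ind_sum[of "{x}" "\<lambda>_. 1"] by (simp add: mult.commute)
  next
    case False
    then have "(\<Sum>y\<in>S. (if y \<in> {x} then 1 else 0) * (1::real)) = 0" by (intro sum.neutral) auto
    then show ?thesis by simp
  qed
  finally show ?thesis .
qed

lemma sum_split_nat: "(\<Sum>t<a + b. F t) = (\<Sum>t<a. F t) + (\<Sum>k<b. F (a + k))" for F :: "nat \<Rightarrow> real"
  by (induction b) (simp_all add: add.assoc)

lemma partial: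
  assumes q0: "0 \<le> q" and q1: "q < 1" and n: "1 \<le> n"
    and bl: "\<And>t. tot A x (t + n) \<le> q * tot A x t"
  shows "(\<Sum>t<M. tot A x t) \<le> n / (1 - q)"
proof -
  have geo: "tot A x (i * n) \<le> q ^ i" for i
  proof (induction i)
    case 0 then show ?case using tot0 by simp
  next
    case (Suc i)
    have "tot A x (Suc i * n) \<le> q * tot A x (i * n)" using bl[of "i * n"] by (simp add: add.commute)
    also have "\<dots> \<le> q * q ^ i" using Suc q0 by (intro mult_left_mono)
    finally show ?case by simp
  qed
  have ps: "(\<Sum>t<N * n. tot A x t) \<le> n / (1 - q) * (1 - q ^ N)" for N
  proof (induction N)
    case 0 then show ?case by simp
  next
    case (Suc N)
    have "(\<Sum>k<n. tot A x (N * n + k)) \<le> (\<Sum>k<n. q ^ N)"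
      using geo[of N] tot_mono by (intro sum_mono) (meson le_add1 order_trans)
    then have "(\<Sum>t<Suc N * n. tot A x t) \<le> n / (1 - q) * (1 - q ^ N) + n * q ^ N"
      using Suc sum_split_nat[where a="N * n" and b=n and F="tot A x"] by (simp add: add.commute)
    also have "\<dots> = n / (1 - q) * (1 - q ^ Suc N)" using q1 by (simp add: field_simps)
    finally show ?case .
  qed
  have "(\<Sum>t<M. tot A x t) \<le> (\<Sum>t<M * n. tot A x t)"
    using n by (intro sum_mono2) (auto simp: tot_nonneg)
  also have "\<dots> \<le> n / (1 - q) * (1 - q ^ M)" by (rule ps)
  also have "\<dots> \<le> n / (1 - q) * 1"
  proof (rule mult_left_mono)
    show "1 - q ^ M \<le> 1" using q0 by simp
    show "0 \<le> real n / (1 - q)" using q1 by simp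
  qed
  also have "\<dots> = n / (1 - q)" by simp
  finally show ?thesis .
qed

lemma dir1:
  assumes a0: "0 < \<alpha>" and a1: "\<alpha> < 1/2"
    and d: "dmix S P \<pi> t0 \<le> 1/4" and t0: "1 \<le> t0" and ne: "S \<noteq> {}"
    and j: "1 \<le> j" and jb: "1 / 2 ^ j \<le> \<alpha> / 2"
    and y: "y \<in> S" and A: "A \<in> targets S \<pi> \<alpha>"
  shows "exp_hit S P A y \<le> ennreal (real (j * t0) / (\<alpha> / 2))"
proof (rule exp_le)
  define n where "n = j * t0"
  have n1: "1 \<le> n" unfolding n_def using j t0 by (simp add: one_le_mult_iff)
  have AS: "\<And>t. A t \<subseteq> S" and Aal: "\<And>t. \<alpha> \<le> sum \<pi> (A t)" using A unfolding targets_def by auto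
  have bl: "tot A y (t + n) \<le> (1 - \<alpha> / 2) * tot A y t" for t
  proof (rule block[OF AS])
    fix z assume z: "z \<in> S"
    define f where "f = (\<lambda>w. if w \<in> A (t + n) then 1 else 0 :: real)"
    have "\<exists>b. \<forall>z\<in>S. b \<le> Pf (j * t0) f z \<and> Pf (j * t0) f z \<le> b + 1 / 2 ^ j"
      using contract_iter[OF d ne, where a=0 and W=1 and f=f and j=j] by (simp add: f_def)
    then obtain b where b: "\<forall>z\<in>S. b \<le> Pf n f z \<and> Pf n f z \<le> b + 1 / 2 ^ j" unfolding n_def by blast
    have e1: "Pf n f z = (\<Sum>w\<in>A (t + n). mpow S P n z w)"
      unfolding Pf_def f_def by (rule ind_sum[OF AS])
    have "\<alpha> \<le> sum \<pi> (A (t + n))" by (rule Aal)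
    also have "\<dots> = (\<Sum>w\<in>S. \<pi> w * f w)" unfolding f_def by (rule ind_sum[OF AS, symmetric])
    also have "\<dots> = (\<Sum>w\<in>S. \<pi> w * Pf n f w)" by (rule Pf_mean[symmetric])
    also have "\<dots> \<le> b + 1 / 2 ^ j" using b by (intro mean_le) auto
    also have "\<dots> \<le> Pf n f z + \<alpha> / 2" using b z jb by force
    finally show "\<alpha> / 2 \<le> (\<Sum>w\<in>A (t + n). mpow S P n z w)" using e1 by simp
  qed
  fix M
  have "(\<Sum>t<M. tot A y t) \<le> n / (1 - (1 - \<alpha> / 2))"
    by (rule partial[OF _ _ n1 bl]) (use a0 a1 in auto)
  then show "(\<Sum>t<M. tot A y t) \<le> real (j * t0) / (\<alpha> / 2)" unfolding n_def by simp
qed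

lemma single:
  assumes S1: "S = {s}" and a0: "0 < \<alpha>"
  shows "tmix S P \<pi> (1/4) = 0" "tmov S P \<pi> \<alpha> = 0"
proof -
  have ps: "\<pi> s = 1" using pi_sum S1 by simp
  have "dmix S P \<pi> 0 = tv S (mpow S P 0 s) \<pi>" unfolding dmix_def S1 by simp
  also have "\<dots> = 0" unfolding tv_def S1 using ps by simp
  finally have d0: "dmix S P \<pi> 0 \<le> 1/4" by simp
  then have ex: "\<exists>t. dmix S P \<pi> t \<le> 1/4" by blast
  have "(LEAST t. dmix S P \<pi> t \<le> 1/4) = 0" using d0 by (simp add: Least_le le_0_eq)
  then show "tmix S P \<pi> (1/4) = 0" unfolding tmix_def using ex by simp
  have "exp_hit S P A x = 0" if A: "A \<in> targets S \<pi> \<alpha>" for A x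
  proof -
    have "A t = {s}" for t
    proof -
      have "A t \<subseteq> {s}" "\<alpha> \<le> sum \<pi> (A t)" using A S1 unfolding targets_def by auto
      then show ?thesis using a0 by (metis empty_iff less_le_not_le subset_singletonD sum.empty)
    qed
    then have "tot A x t = 0" for t unfolding tot_def by (intro sum.neutral) (use S1 surv_A in auto)
    then show ?thesis unfolding exp_hit_def tot_def[symmetric] by simp
  qed
  then have "tmov S P \<pi> \<alpha> \<le> 0" unfolding tmov_def by (intro SUP_least) auto
  then show "tmov S P \<pi> \<alpha> = 0" by simp
qed

lemma small_pi:
  assumes a: "a \<in> S" and b: "b \<in> S" and ab: "a \<noteq> b"
  shows "\<exists>x0\<in>S. \<pi> x0 \<le> 1/2"
proof -
  have "sum \<pi> {a, b} \<le> sum \<pi> S" using a b fin pi_nonneg by (intro sum_mono2) auto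
  then have "\<pi> a + \<pi> b \<le> 1" using ab pi_sum by simp
  show ?thesis
  proof (cases "\<pi> a \<le> 1/2")
    case True then show ?thesis using a by blast
  next
    case False then have "\<pi> b \<le> 1/2" using \<open>\<pi> a + \<pi> b \<le> 1\<close> by linarith
    then show ?thesis using b by blast
  qed
qed

lemma tmov_ge1:
  assumes x0: "x0 \<in> S" and px: "\<pi> x0 \<le> 1/2" and a1: "\<alpha> \<le> 1/2"
  shows "1 \<le> tmov S P \<pi> \<alpha>"
proof -
  define A where "A = (\<lambda>t::nat. S - {x0})"
  have At: "A \<in> targets S \<pi> \<alpha>"
    unfolding targets_def A_def using sum_diff1[of S \<pi> x0] fin x0 px a1 pi_sum by auto
  have "tot A x0 0 = (\<Sum>y\<in>S. (if y \<in> {x0} then 1 else 0) * 1)"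
    unfolding tot_def A_def by (intro sum.cong) auto
  also have "\<dots> = 1" using ind_sum[of "{x0}" "\<lambda>_. 1"] x0 by (simp add: mult.commute)
  finally have "ennreal (\<Sum>t<Suc 0. tot A x0 t) = 1" by simp
  then have "1 \<le> exp_hit S P A x0" using exp_ge[where N="Suc 0" and A=A and x=x0] by simp
  also have "\<dots> \<le> (SUP A\<in>targets S \<pi> \<alpha>. exp_hit S P A x0)" by (rule SUP_upper[OF At])
  also have "\<dots> \<le> tmov S P \<pi> \<alpha>" unfolding tmov_def by (rule SUP_upper[OF x0])
  finally show ?thesis .
qed

lemma t0_pos:
  assumes a: "a \<in> S" and b: "b \<in> S" and ab: "a \<noteq> b"
  shows "\<not> dmix S P \<pi> 0 \<le> 1/4"
proof
  assume d: "dmix S P \<pi> 0 \<le> 1/4"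
  define f where "f = (\<lambda>y. if y = a then 1 else 0 :: real)"
  have "Pf 0 f a - Pf 0 f b \<le> 1 / 2"
    by (rule contract1[OF d, where a=0 and W=1 and f=f]) (use a b in \<open>auto simp: f_def\<close>)
  then show False using a b ab by (simp add: Pf_0 f_def)
qed

lemma main_loc:
  assumes a0: "0 < \<alpha>" and a1: "\<alpha> < 1/2"
    and k: "(\<alpha> / (1 - \<alpha>) + 2 * ((1 - \<alpha> / (1 - \<alpha>)) / 4)) ^ k \<le> 1/4"
    and j: "1 \<le> j" and jb: "1 / 2 ^ j \<le> \<alpha> / 2"
    and ne: "S \<noteq> {}"
  shows "ennreal (\<alpha> / (2 * real j)) * tmov S P \<pi> \<alpha> \<le> tmix S P \<pi> (1/4) \<and>
         tmix S P \<pi> (1/4) \<le> ennreal ((real k + 1) * (1 / ((1 - \<alpha> / (1 - \<alpha>)) / 4) + 1)) * tmov S P \<pi> \<alpha>"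
proof (cases "\<exists>s. S = {s}")
  case True
  then obtain s where "S = {s}" by blast
  then show ?thesis using single[of s \<alpha>] a0 by simp
next
  case False
  define p where "p = (1 - \<alpha> / (1 - \<alpha>)) / 4"
  have bt: "\<alpha> / (1 - \<alpha>) < 1" using a0 a1 by (simp add: field_simps)
  have p0: "0 < p" unfolding p_def using bt by simp
  obtain a b where ab: "a \<in> S" "b \<in> S" "a \<noteq> b" using False ne by blast
  obtain x0 where x0: "x0 \<in> S" "\<pi> x0 \<le> 1/2" using small_pi[OF ab] by blast
  have T1: "1 \<le> tmov S P \<pi> \<alpha>" using tmov_ge1[OF x0] a1 by simp
  show ?thesis
  proof
    show "ennreal (\<alpha> / (2 * real j)) * tmov S P \<pi> \<alpha> \<le> tmix S P \<pi> (1/4)"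
    proof (cases "\<exists>t. dmix S P \<pi> t \<le> 1/4")
      case False then show ?thesis unfolding tmix_def by simp
    next
      case True
      define t0 where "t0 = (LEAST t. dmix S P \<pi> t \<le> 1/4)"
      have d: "dmix S P \<pi> t0 \<le> 1/4" unfolding t0_def using True by (rule LeastI_ex)
      have t0: "1 \<le> t0" using t0_pos[OF ab] d by (cases t0) auto
      have "tmov S P \<pi> \<alpha> \<le> ennreal (real (j * t0) / (\<alpha> / 2))"
        unfolding tmov_def
        by (intro SUP_least dir1[OF a0 a1 d t0 ne j jb]) auto
      then have "ennreal (\<alpha> / (2 * real j)) * tmov S P \<pi> \<alpha>
          \<le> ennreal (\<alpha> / (2 * real j)) * ennreal (real (j * t0) / (\<alpha> / 2))"
        by (rule mult_left_mono) simp
      also have "\<dots> = ennreal (\<alpha> / (2 * real j) * (real (j * t0) / (\<alpha> / 2)))"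
        by (rule ennreal_mult[symmetric]) (use a0 in auto)
      also have "\<alpha> / (2 * real j) * (real (j * t0) / (\<alpha> / 2)) = real t0"
        using a0 j by (simp add: field_simps)
      also have "ennreal (real t0) = tmix S P \<pi> (1/4)"
        unfolding tmix_def t0_def using True by (simp add: ennreal_of_nat_eq_real_of_nat)
      finally show ?thesis .
    qed
    show "tmix S P \<pi> (1/4) \<le> ennreal ((real k + 1) * (1 / ((1 - \<alpha> / (1 - \<alpha>)) / 4) + 1)) * tmov S P \<pi> \<alpha>"
    proof (cases "tmov S P \<pi> \<alpha>")
      case top
      have "ennreal ((real k + 1) * (1 / ((1 - \<alpha> / (1 - \<alpha>)) / 4) + 1)) \<noteq> 0"
        using p0 unfolding p_def[symmetric] by (simp add: ennreal_eq_0_iff not_le add_pos_pos)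
      then show ?thesis using top by (simp add: ennreal_mult_top)
    next
      case (real Tr)
      have Tr1: "1 \<le> Tr" using T1 real by simp
      have T: "exp_hit S P A y \<le> ennreal Tr" if "y \<in> S" "A \<in> targets S \<pi> \<alpha>" for y A
      proof -
        have "exp_hit S P A y \<le> (SUP A\<in>targets S \<pi> \<alpha>. exp_hit S P A y)" by (rule SUP_upper[OF that(2)])
        also have "\<dots> \<le> tmov S P \<pi> \<alpha>" unfolding tmov_def by (rule SUP_upper[OF that(1)])
        finally show ?thesis using real by simp
      qed
      define m where "m = nat \<lceil>Tr / p\<rceil>"
      have m1: "Tr / p \<le> real m" unfolding m_def by linarith
      have x0: "0 \<le> Tr / p" using real(1) p0 by simp
      have e: "real m = real_of_int \<lceil>Tr / p\<rceil>" unfolding m_def using x0 by simp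
      have m2: "real m \<le> Tr / p + 1" using e ceiling_correct[of "Tr / p"] by linarith
      have Tm: "Tr \<le> p * (real m + 1)" using m1 p0 by (simp add: field_simps)
      have "dmix S P \<pi> (k * m) \<le> (\<alpha> / (1 - \<alpha>) + 2 * p) ^ k"
        by (rule mix_bound[OF a0 a1 T real(1) Tm ne])
      then have dk: "dmix S P \<pi> (k * m) \<le> 1/4" using k unfolding p_def by simp
      then have ex: "\<exists>t. dmix S P \<pi> t \<le> 1/4" by blast
      have "tmix S P \<pi> (1/4) = of_nat (LEAST t. dmix S P \<pi> t \<le> 1/4)" unfolding tmix_def using ex by simp
      also have "\<dots> \<le> of_nat (k * m)"
      proof -
        have "(LEAST t. dmix S P \<pi> t \<le> 1/4) \<le> k * m" using dk by (rule Least_le)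
        then show ?thesis by (simp only: of_nat_le_iff)
      qed
      also have "\<dots> = ennreal (real k * real m)" by (simp add: ennreal_of_nat_eq_real_of_nat)
      also have "\<dots> \<le> ennreal ((real k + 1) * (1 / p + 1) * Tr)"
      proof (rule ennreal_leI)
        have "real m \<le> (1 / p + 1) * Tr"
        proof -
          have "Tr / p + 1 \<le> Tr / p + Tr" using Tr1 by simp
          then show ?thesis using m2 by (simp add: field_simps)
        qed
        moreover have "0 \<le> real m" by simp
        ultimately have "real k * real m \<le> (real k + 1) * ((1 / p + 1) * Tr)"
          by (intro mult_mono) auto
        then show "real k * real m \<le> (real k + 1) * (1 / p + 1) * Tr" by (simp add: mult.assoc)
      qed
      also have "\<dots> = ennreal ((real k + 1) * (1 / p + 1)) * tmov S P \<pi> \<alpha>"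
        unfolding real(2) by (rule ennreal_mult) (use p0 real(1) in auto)
      finally show ?thesis unfolding p_def .
    qed
  qed
qed

end

theorem theorem1p1:
  fixes \<alpha> :: real
  assumes "0 < \<alpha>" and "\<alpha> < 1/2"
  shows "\<exists>c C :: real. c > 0 \<and> C > 0 \<and>
    (\<forall>S P \<pi>. finite S \<and> S \<noteq> {} \<and> stochastic S P \<and> irreducible_chain S P \<and> stationary S P \<pi> \<longrightarrow>
       ennreal c * tmov S P \<pi> \<alpha> \<le> tmix S P \<pi> (1/4) \<and>
       tmix S P \<pi> (1/4) \<le> ennreal C * tmov S P \<pi> \<alpha>)"
proof -
  define \<beta> where "\<beta> = \<alpha> / (1 - \<alpha>)"
  define p where "p = (1 - \<beta>) / 4"
  have bt: "\<beta> < 1" "0 \<le> \<beta>" unfolding \<beta>_def using assms by (auto simp: field_simps)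
  have p0: "0 < p" unfolding p_def using bt by simp
  have th: "\<beta> + 2 * p < 1" unfolding p_def using bt by (simp add: field_simps)
  obtain k where k: "(\<beta> + 2 * p) ^ k < 1/4" using real_arch_pow_inv[OF _ th, of "1/4"] by auto
  obtain j0 where j0: "(1/2::real) ^ j0 < \<alpha> / 2" using real_arch_pow_inv[of "\<alpha> / 2" "1/2"] assms by auto
  define j where "j = Suc j0"
  have j: "1 \<le> j" unfolding j_def by simp
  have jb: "1 / 2 ^ j \<le> \<alpha> / 2"
  proof -
    have "(1/2::real) ^ j \<le> (1/2) ^ j0" unfolding j_def by (simp add: power_decreasing)
    then show ?thesis using j0 by (simp add: power_one_over)
  qed
  show ?thesis
  proof (intro exI conjI allI impI)
    show "0 < \<alpha> / (2 * real j)" using assms j by simp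
    show "0 < (real k + 1) * (1 / ((1 - \<alpha> / (1 - \<alpha>)) / 4) + 1)"
      using p0 unfolding p_def \<beta>_def by (simp add: add_pos_pos)
    fix S P \<pi>
    assume H: "finite S \<and> S \<noteq> {} \<and> stochastic S P \<and> irreducible_chain S P \<and> stationary S P \<pi>"
    then interpret mc S P \<pi> by unfold_locales auto
    have "ennreal (\<alpha> / (2 * real j)) * tmov S P \<pi> \<alpha> \<le> tmix S P \<pi> (1/4) \<and>
         tmix S P \<pi> (1/4) \<le> ennreal ((real k + 1) * (1 / ((1 - \<alpha> / (1 - \<alpha>)) / 4) + 1)) * tmov S P \<pi> \<alpha>"
    proof -
      have kk: "(\<alpha> / (1 - \<alpha>) + 2 * ((1 - \<alpha> / (1 - \<alpha>)) / 4)) ^ k \<le> 1/4"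
        using k unfolding p_def \<beta>_def by simp
      show ?thesis using main_loc[OF assms kk j jb] H by auto
    qed
    then show "ennreal (\<alpha> / (2 * real j)) * tmov S P \<pi> \<alpha> \<le> tmix S P \<pi> (1/4)"
      "tmix S P \<pi> (1/4) \<le> ennreal ((real k + 1) * (1 / ((1 - \<alpha> / (1 - \<alpha>)) / 4) + 1)) * tmov S P \<pi> \<alpha>"
      by auto
  qed
qed

end
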